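(* Let $\mathbf{M}$ be symmetric, $\epsilon>0$, and $\mathbf{X}=[\bm{x}_1,\dots,\bm{x}_r]\in\mathrm{St}(N,r)$ with $\|\mathrm{grad}\,g(\mathbf{X})\|_F\le\epsilon$. Write $\mathbf{X}^\top\mathbf{M}\mathbf{X}=\mathbf{D}_{\mathbf{M}}+\mathbf{E}_{\mathbf{M}}$ with $\mathbf{D}_{\mathbf{M}}$ its diagonal part and $\mathbf{E}_{\mathbf{M}}$ its off-diagonal part. Then $\|\mathbf{E}_{\mathbf{M}}\|_F\le2\epsilon$, $\|\mathbf{X}\mathbf{X}^\top\mathbf{M}\mathbf{X}-\mathbf{M}\mathbf{X}\|_F\le\epsilon$, $\|\mathbf{X}\mathbf{D}_{\mathbf{M}}-\mathbf{M}\mathbf{X}\|_F\le3\epsilon$, and for each $j\in[r]$ there is an eigenvalue $\lambda_{i_j}$ of $\mathbf{M}$ with $|\bm{x}_j^\top\mathbf{M}\bm{x}_j-\lambda_{i_j}|\le3\epsilon$.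
   Context: $\mathrm{St}(N,r)=\{\mathbf{X}\in\mathbb{R}^{N\times r}:\mathbf{X}^\top\mathbf{X}=\mathbf{I}_r\}$, $\mathbf{N}=\mathrm{diag}(r,r-1,\dots,1)$, $g(\mathbf{X})=-\tfrac12\mathrm{tr}(\mathbf{X}^\top\mathbf{M}\mathbf{X}\mathbf{N})$ on $\mathrm{St}(N,r)$ with Riemannian gradient $\mathrm{grad}\,g(\mathbf{X})=(\mathbf{X}\mathbf{X}^\top-\mathbf{I}_N)\mathbf{M}\mathbf{X}\mathbf{N}-\tfrac12\mathbf{X}[\mathbf{X}^\top\mathbf{M}\mathbf{X},\mathbf{N}]$, $[\mathbf{A},\mathbf{B}]=\mathbf{A}\mathbf{B}-\mathbf{B}\mathbf{A}$. *)

theory Defs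
  imports Complex_Main "Jordan_Normal_Form.Char_Poly"
begin

definition frob_norm :: "real mat \<Rightarrow> real" where
  "frob_norm A = sqrt (\<Sum>i<dim_row A. \<Sum>j<dim_col A. (A $$ (i, j))\<^sup>2)"

definition stiefel :: "nat \<Rightarrow> nat \<Rightarrow> real mat set" where
  "stiefel N r = {X. X \<in> carrier_mat N r \<and> transpose_mat X * X = 1\<^sub>m r}"

text \<open>N = diag(r, r-1, ..., 1) (0-based index i carries weight r - i).\<close>
definition Nmat :: "nat \<Rightarrow> real mat" where
  "Nmat r = mat r r (\<lambda>(i, j). if i = j then real (r - i) else 0)"

definition commutator :: "real mat \<Rightarrow> real mat \<Rightarrow> real mat" where
  "commutator A B = A * B - B * A"

text \<open>Riemannian gradient of g(X) = -1/2 tr(X^T M X N) on St(N,r).\<close>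
definition grad_g :: "real mat \<Rightarrow> real mat \<Rightarrow> real mat" where
  "grad_g M X =
     (X * transpose_mat X - 1\<^sub>m (dim_row X)) * M * X * Nmat (dim_col X)
     - (1/2) \<cdot>\<^sub>m (X * commutator (transpose_mat X * M * X) (Nmat (dim_col X)))"

definition diag_part :: "real mat \<Rightarrow> real mat" where
  "diag_part A = mat (dim_row A) (dim_col A) (\<lambda>(i, j). if i = j then A $$ (i, j) else 0)"

definition offdiag_part :: "real mat \<Rightarrow> real mat" where
  "offdiag_part A = A - diag_part A"

end

theory Submission
  imports Defs
begin

lemma quad_disc:
  fixes a b c :: real
  assumes h: "\<And>t. 0 \<le> a + 2*t*b + t^2*c" and c: "c \<ge> 0"
  shows "b^2 \<le> a*c"
proof (cases "c = 0")
  case True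
  have "b = 0"
  proof (rule ccontr)
    assume b: "b \<noteq> 0"
    have "0 \<le> a + 2*(-(\<bar>a\<bar>+1)/(2*b))*b + (-(\<bar>a\<bar>+1)/(2*b))^2*c" by (rule h)
    also have "\<dots> = a - (\<bar>a\<bar>+1)" using b True by (simp add: field_simps)
    finally show False by linarith
  qed
  then show ?thesis using True by simp
next
  case False
  hence cp: "c > 0" using c by simp
  have "0 \<le> a + 2*(-b/c)*b + (-b/c)^2*c" by (rule h)
  also have "\<dots> = (a*c - b^2)/c" using cp by (simp add: field_simps power2_eq_square)
  finally show ?thesis using cp by (simp add: divide_nonneg_pos zero_le_divide_iff)
qed

lemma sym_swap:
  fixes C :: "real mat"
  assumes C: "C \<in> carrier_mat n n" and s: "transpose_mat C = C"
    and v: "v \<in> carrier_vec n" and w: "w \<in> carrier_vec n"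
  shows "w \<bullet> (C *\<^sub>v v) = v \<bullet> (C *\<^sub>v w)"
proof -
  have "(transpose_mat C *\<^sub>v w) \<bullet> v = w \<bullet> (C *\<^sub>v v)"
    by (rule transpose_vec_mult_scalar[OF C v w])
  then have "(C *\<^sub>v w) \<bullet> v = w \<bullet> (C *\<^sub>v v)" using s by simp
  moreover have "(C *\<^sub>v w) \<bullet> v = v \<bullet> (C *\<^sub>v w)"
    by (rule comm_scalar_prod[of _ n], insert C w v, auto)
  ultimately show ?thesis by simp
qed

lemma psd_cs:
  fixes C :: "real mat"
  assumes C: "C \<in> carrier_mat n n" and s: "transpose_mat C = C"
    and psd: "\<And>u. u \<in> carrier_vec n \<Longrightarrow> u \<bullet> (C *\<^sub>v u) \<ge> 0"
    and v: "v \<in> carrier_vec n" and w: "w \<in> carrier_vec n"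
  shows "(v \<bullet> (C *\<^sub>v w))^2 \<le> (v \<bullet> (C *\<^sub>v v)) * (w \<bullet> (C *\<^sub>v w))"
proof (rule quad_disc)
  show "0 \<le> w \<bullet> (C *\<^sub>v w)" using psd w by auto
  fix t :: real
  have u: "v + t \<cdot>\<^sub>v w \<in> carrier_vec n" using v w by auto
  have e1: "C *\<^sub>v (v + t \<cdot>\<^sub>v w) = C *\<^sub>v v + t \<cdot>\<^sub>v (C *\<^sub>v w)"
    using C v w by (simp add: mult_add_distrib_mat_vec mult_mat_vec)
  have "(v + t \<cdot>\<^sub>v w) \<bullet> (C *\<^sub>v (v + t \<cdot>\<^sub>v w))
     = v \<bullet> (C *\<^sub>v v) + t * (v \<bullet> (C *\<^sub>v w)) + t * (w \<bullet> (C *\<^sub>v v)) + t * t * (w \<bullet> (C *\<^sub>v w))"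
    unfolding e1 using C v w
    by (simp add: add_scalar_prod_distrib[of _ n] scalar_prod_add_distrib[of _ n] algebra_simps)
  also have "w \<bullet> (C *\<^sub>v v) = v \<bullet> (C *\<^sub>v w)" by (rule sym_swap[OF C s v w])
  finally have "(v + t \<cdot>\<^sub>v w) \<bullet> (C *\<^sub>v (v + t \<cdot>\<^sub>v w))
     = v \<bullet> (C *\<^sub>v v) + 2 * t * (v \<bullet> (C *\<^sub>v w)) + t^2 * (w \<bullet> (C *\<^sub>v w))"
    by (simp add: power2_eq_square algebra_simps)
  moreover have "0 \<le> (v + t \<cdot>\<^sub>v w) \<bullet> (C *\<^sub>v (v + t \<cdot>\<^sub>v w))" using psd u by auto
  ultimately show "0 \<le> v \<bullet> (C *\<^sub>v v) + 2 * t * (v \<bullet> (C *\<^sub>v w)) + t^2 * (w \<bullet> (C *\<^sub>v w))" by simp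
qed

lemma dot_ge0: fixes v :: "real vec" shows "v \<bullet> v \<ge> 0"
  unfolding scalar_prod_def by (rule sum_nonneg) simp

lemma dot_eq0: fixes v :: "real vec" assumes v: "v \<in> carrier_vec n" and z: "v \<bullet> v = 0"
  shows "v = 0\<^sub>v n"
proof -
  have "\<forall>i\<in>{0..<dim_vec v}. v $ i * v $ i = 0"
    using z unfolding scalar_prod_def by (subst sum_nonneg_eq_0_iff[symmetric]) auto
  then show ?thesis using v by (intro eq_vecI) auto
qed

lemma dot_cs:
  fixes v w :: "real vec"
  assumes v: "v \<in> carrier_vec n" and w: "w \<in> carrier_vec n"
  shows "(v \<bullet> w)^2 \<le> (v \<bullet> v) * (w \<bullet> w)"
  using psd_cs[of "1\<^sub>m n" n v w] v w by (simp add: dot_ge0)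

lemma smult_mat_vec: fixes A :: "real mat"
  assumes "A \<in> carrier_mat n m" "v \<in> carrier_vec m"
  shows "(k \<cdot>\<^sub>m A) *\<^sub>v v = k \<cdot>\<^sub>v (A *\<^sub>v v)"
  using assms by (intro eq_vecI) (auto simp: scalar_prod_def sum_distrib_left ac_simps)

lemma mat_vec_bound:
  fixes C :: "real mat"
  assumes C: "C \<in> carrier_mat n m" and w: "w \<in> carrier_vec m"
  shows "(C *\<^sub>v w) \<bullet> (C *\<^sub>v w) \<le> (\<Sum>i<n. row C i \<bullet> row C i) * (w \<bullet> w)"
proof -
  have "(C *\<^sub>v w) \<bullet> (C *\<^sub>v w) = (\<Sum>i<n. (row C i \<bullet> w)^2)"
    using C by (simp add: scalar_prod_def[of "C *\<^sub>v w"] power2_eq_square lessThan_atLeast0)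
  also have "\<dots> \<le> (\<Sum>i<n. (row C i \<bullet> row C i) * (w \<bullet> w))"
    by (rule sum_mono, rule dot_cs[of _ m], insert C w, auto)
  finally show ?thesis by (simp add: sum_distrib_right)
qed

lemma sqnn: "sum (\<lambda>i. row (C::real mat) i \<bullet> row C i) I \<ge> 0"
  by (simp add: dot_ge0 sum_nonneg)

lemma min_eig:
  fixes B :: "real mat"
  assumes B: "B \<in> carrier_mat n n" and s: "transpose_mat B = B"
    and psd: "\<And>u. u \<in> carrier_vec n \<Longrightarrow> u \<bullet> (B *\<^sub>v u) \<ge> 0"
    and x: "x \<in> carrier_vec n" and x1: "x \<bullet> x = 1"
  shows "\<exists>\<nu> v. v \<in> carrier_vec n \<and> v \<noteq> 0\<^sub>v n \<and> B *\<^sub>v v = \<nu> \<cdot>\<^sub>v v \<and> 0 \<le> \<nu> \<and> \<nu> \<le> x \<bullet> (B *\<^sub>v x)"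
proof -
  define S where "S = (\<lambda>v. v \<bullet> (B *\<^sub>v v)) ` {v \<in> carrier_vec n. v \<bullet> v = 1}"
  define \<nu> where "\<nu> = Inf S"
  have ne: "S \<noteq> {}" using x x1 unfolding S_def by auto
  have bdd: "bdd_below S" unfolding S_def bdd_below_def using psd by auto
  have le: "\<nu> \<le> x \<bullet> (B *\<^sub>v x)" unfolding \<nu>_def
    by (rule cInf_lower[OF _ bdd], insert x x1, auto simp: S_def)
  have ge0: "0 \<le> \<nu>" unfolding \<nu>_def
    by (rule cInf_greatest[OF ne], auto simp: S_def psd)
  have lowS: "\<nu> \<le> v \<bullet> (B *\<^sub>v v)" if "v \<in> carrier_vec n" "v \<bullet> v = 1" for v
    unfolding \<nu>_def by (rule cInf_lower[OF _ bdd], insert that, auto simp: S_def)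
  define C where "C = B - \<nu> \<cdot>\<^sub>m 1\<^sub>m n"
  have C: "C \<in> carrier_mat n n" unfolding C_def using B by auto
  have t1: "transpose_mat (\<nu> \<cdot>\<^sub>m 1\<^sub>m n) = \<nu> \<cdot>\<^sub>m 1\<^sub>m n" by (intro eq_matI) auto
  have Cs: "transpose_mat C = C" unfolding C_def using B s t1
    by (simp add: transpose_minus[of _ n n])
  have Cv: "C *\<^sub>v u = B *\<^sub>v u - \<nu> \<cdot>\<^sub>v u" if u: "u \<in> carrier_vec n" for u
    unfolding C_def using B u by (simp add: minus_mult_distrib_mat_vec[of _ n n] smult_mat_vec[of _ n n])
  have uCu: "u \<bullet> (C *\<^sub>v u) = u \<bullet> (B *\<^sub>v u) - \<nu> * (u \<bullet> u)" if u: "u \<in> carrier_vec n" for u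
    using Cv[OF u] u B by (simp add: scalar_prod_minus_distrib[of _ n])
  have Cpsd: "u \<bullet> (C *\<^sub>v u) \<ge> 0" if u: "u \<in> carrier_vec n" for u
  proof (cases "u \<bullet> u = 0")
    case True
    then have "u = 0\<^sub>v n" using dot_eq0 u by blast
    then show ?thesis using C by simp
  next
    case False
    define q where "q = u \<bullet> u"
    have q: "q > 0" using False dot_ge0[of u] unfolding q_def by linarith
    define z where "z = (1 / sqrt q) \<cdot>\<^sub>v u"
    have z: "z \<in> carrier_vec n" unfolding z_def using u by simp
    have zz: "z \<bullet> z = q / (sqrt q)^2" unfolding z_def q_def using u
      by (simp add: power2_eq_square)
    have "z \<bullet> z = 1" unfolding zz using q by simp
    then have "\<nu> \<le> z \<bullet> (B *\<^sub>v z)" using lowS z by simp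
    also have "z \<bullet> (B *\<^sub>v z) = (u \<bullet> (B *\<^sub>v u)) / (sqrt q)^2" unfolding z_def using u B
      by (simp add: mult_mat_vec power2_eq_square)
    also have "\<dots> = (u \<bullet> (B *\<^sub>v u)) / q" using q by simp
    finally have "\<nu> * q \<le> u \<bullet> (B *\<^sub>v u)" using q by (simp add: pos_le_divide_eq)
    then show ?thesis unfolding uCu[OF u] q_def by simp
  qed
  have "det C = 0"
  proof (rule ccontr)
    assume d: "det C \<noteq> 0"
    from det_non_zero_imp_unit[OF C d, of "()"]
    obtain Ci where Ci: "Ci \<in> carrier_mat n n" and CiC: "Ci * C = 1\<^sub>m n"
      unfolding Units_def ring_mat_def by auto
    define K1 where "K1 = (\<Sum>i<n. row C i \<bullet> row C i)"
    define K2 where "K2 = (\<Sum>i<n. row Ci i \<bullet> row Ci i)"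
    have K1: "K1 \<ge> 0" unfolding K1_def by (rule sqnn)
    have K2: "K2 \<ge> 0" unfolding K2_def by (rule sqnn)
    define \<kappa> where "\<kappa> = K2 * sqrt K1 + 1"
    have kp: "\<kappa> > 0" unfolding \<kappa>_def using K1 K2 by (simp add: add_nonneg_pos)
    have key: "\<nu> + 1/\<kappa> \<le> v \<bullet> (B *\<^sub>v v)" if v: "v \<in> carrier_vec n" "v \<bullet> v = 1" for v
    proof -
      define w where "w = C *\<^sub>v v"
      have w: "w \<in> carrier_vec n" unfolding w_def using C v by simp
      have "Ci *\<^sub>v w = v" unfolding w_def
        using assoc_mult_mat_vec[OF Ci C v(1), symmetric] CiC v by simp
      then have "1 \<le> K2 * (w \<bullet> w)" using mat_vec_bound[OF Ci w] v unfolding K2_def by simp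
      define L where "L = w \<bullet> w"
      have L1: "1 \<le> K2 * L" unfolding L_def by fact
      have Lp: "L > 0" using L1 K2 dot_ge0[of w] unfolding L_def
        by (metis mult_eq_0_iff not_one_le_zero order_le_less)
      have Lv: "L = v \<bullet> (C *\<^sub>v w)" unfolding L_def using sym_swap[OF C Cs v(1) w] unfolding w_def .
      have cs1: "L^2 \<le> (v \<bullet> (C *\<^sub>v v)) * (w \<bullet> (C *\<^sub>v w))"
        unfolding Lv by (rule psd_cs[OF C Cs Cpsd v(1) w])
      have "(w \<bullet> (C *\<^sub>v w))^2 \<le> (w \<bullet> w) * ((C *\<^sub>v w) \<bullet> (C *\<^sub>v w))"
        by (rule dot_cs[of _ n], insert w C, auto)
      also have "\<dots> \<le> L * (K1 * L)" unfolding L_def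
        by (rule mult_left_mono, insert mat_vec_bound[OF C w] dot_ge0[of w], auto simp: K1_def)
      finally have "(w \<bullet> (C *\<^sub>v w))^2 \<le> (sqrt K1 * L)^2" using K1 by (simp add: power2_eq_square ac_simps)
      then have wCw: "w \<bullet> (C *\<^sub>v w) \<le> sqrt K1 * L"
        using Lp K1 by (meson power2_le_imp_le real_sqrt_ge_zero less_imp_le mult_nonneg_nonneg)
      have a0: "v \<bullet> (C *\<^sub>v v) \<ge> 0" using Cpsd v by simp
      have "L * L \<le> (v \<bullet> (C *\<^sub>v v)) * (sqrt K1 * L)"
        using cs1 mult_left_mono[OF wCw a0] by (simp add: power2_eq_square)
      then have LL: "L \<le> (v \<bullet> (C *\<^sub>v v)) * sqrt K1" using Lp
        by (simp add: mult.commute mult.left_commute)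
      have "1 \<le> K2 * ((v \<bullet> (C *\<^sub>v v)) * sqrt K1)"
        using L1 mult_left_mono[OF LL K2] by linarith
      also have "\<dots> \<le> \<kappa> * (v \<bullet> (C *\<^sub>v v))" unfolding \<kappa>_def using a0
        by (simp add: algebra_simps)
      finally have "1/\<kappa> \<le> v \<bullet> (C *\<^sub>v v)" using kp by (simp add: divide_le_eq mult.commute)
      then show ?thesis unfolding uCu[OF v(1)] v(2) by simp
    qed
    have "\<nu> + 1/\<kappa> \<le> Inf S"
    proof (rule cInf_greatest[OF ne])
      fix y assume "y \<in> S"
      then obtain v where "v \<in> carrier_vec n" "v \<bullet> v = 1" "y = v \<bullet> (B *\<^sub>v v)" unfolding S_def by auto
      then show "\<nu> + 1/\<kappa> \<le> y" using key by blast
    qed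
    then have "\<nu> + 1/\<kappa> \<le> \<nu>" unfolding \<nu>_def .
    then show False using kp by simp
  qed
  then obtain v where v: "v \<in> carrier_vec n" "v \<noteq> 0\<^sub>v n" "C *\<^sub>v v = 0\<^sub>v n"
    using det_0_iff_vec_prod_zero[OF C] by blast
  have "B *\<^sub>v v = \<nu> \<cdot>\<^sub>v v"
  proof -
    have "B *\<^sub>v v - \<nu> \<cdot>\<^sub>v v = 0\<^sub>v n" using v Cv by simp
    note h = this
    show ?thesis
    proof (rule eq_vecI)
      fix i assume "i < dim_vec (\<nu> \<cdot>\<^sub>v v)"
      then have i: "i < n" using v by simp
      from arg_cong[OF h, of "\<lambda>x. x $ i"] i B v(1) show "(B *\<^sub>v v) $ i = (\<nu> \<cdot>\<^sub>v v) $ i" by simp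
    qed (insert B v, simp)
  qed
  then show ?thesis using v ge0 le by blast
qed

lemma sym_eig_near:
  fixes M :: "real mat"
  assumes M: "M \<in> carrier_mat n n" and s: "transpose_mat M = M"
    and x: "x \<in> carrier_vec n" and x1: "x \<bullet> x = 1"
  shows "\<exists>lam. eigenvalue M lam \<and> (d - lam)^2 \<le> (M *\<^sub>v x - d \<cdot>\<^sub>v x) \<bullet> (M *\<^sub>v x - d \<cdot>\<^sub>v x)"
proof -
  define A where "A = M - d \<cdot>\<^sub>m 1\<^sub>m n"
  have A: "A \<in> carrier_mat n n" unfolding A_def using M by auto
  have t1: "transpose_mat (d \<cdot>\<^sub>m 1\<^sub>m n) = d \<cdot>\<^sub>m 1\<^sub>m n" by (intro eq_matI) auto
  have As: "transpose_mat A = A" unfolding A_def using M s t1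
    by (simp add: transpose_minus[of _ n n])
  have Av: "A *\<^sub>v u = M *\<^sub>v u - d \<cdot>\<^sub>v u" if u: "u \<in> carrier_vec n" for u
    unfolding A_def using M u by (simp add: minus_mult_distrib_mat_vec[of _ n n] smult_mat_vec[of _ n n])
  define B where "B = A * A"
  have B: "B \<in> carrier_mat n n" unfolding B_def using A by auto
  have Bs: "transpose_mat B = B" unfolding B_def using A As by (simp add: transpose_mult[of _ n n])
  have Bv: "B *\<^sub>v u = A *\<^sub>v (A *\<^sub>v u)" if u: "u \<in> carrier_vec n" for u
    unfolding B_def using A u by simp
  have uBu: "u \<bullet> (B *\<^sub>v u) = (A *\<^sub>v u) \<bullet> (A *\<^sub>v u)" if u: "u \<in> carrier_vec n" for u
    unfolding Bv[OF u] using sym_swap[OF A As u, of "A *\<^sub>v u"] A u by simp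
  have psd: "u \<bullet> (B *\<^sub>v u) \<ge> 0" if u: "u \<in> carrier_vec n" for u
    unfolding uBu[OF u] by (rule dot_ge0)
  obtain \<nu> v where v: "v \<in> carrier_vec n" "v \<noteq> 0\<^sub>v n" "B *\<^sub>v v = \<nu> \<cdot>\<^sub>v v" and nu: "0 \<le> \<nu>" "\<nu> \<le> x \<bullet> (B *\<^sub>v x)"
    using min_eig[OF B Bs psd x x1] by blast
  have nu2: "\<nu> \<le> (M *\<^sub>v x - d \<cdot>\<^sub>v x) \<bullet> (M *\<^sub>v x - d \<cdot>\<^sub>v x)" using nu(2) uBu[OF x] Av[OF x] by simp
  define t where "t = sqrt \<nu>"
  have t2: "t^2 = \<nu>" unfolding t_def using nu by simp
  have AAv: "A *\<^sub>v (A *\<^sub>v v) = \<nu> \<cdot>\<^sub>v v" using v Bv by simp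
  define w where "w = A *\<^sub>v v + t \<cdot>\<^sub>v v"
  have w: "w \<in> carrier_vec n" unfolding w_def using A v by simp
  show ?thesis
  proof (cases "w = 0\<^sub>v n")
    case True
    have "M *\<^sub>v v = (d - t) \<cdot>\<^sub>v v"
    proof (rule eq_vecI)
      fix i assume "i < dim_vec ((d - t) \<cdot>\<^sub>v v)"
      then have i: "i < n" using v by simp
      from arg_cong[OF True, of "\<lambda>x. x $ i"] i A v(1) Av[OF v(1)]
      have "(A *\<^sub>v v) $ i = - t * v $ i" unfolding w_def by simp
      then show "(M *\<^sub>v v) $ i = ((d - t) \<cdot>\<^sub>v v) $ i" using Av[OF v(1)] i M v(1)
        by (simp add: algebra_simps)
    qed (insert M v, simp)
    then have "eigenvalue M (d - t)" unfolding eigenvalue_def eigenvector_def using M v by auto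
    then show ?thesis using nu2 t2 by (intro exI[of _ "d - t"]) simp
  next
    case False
    have Aw: "A *\<^sub>v w = t \<cdot>\<^sub>v w"
    proof -
      have "A *\<^sub>v w = A *\<^sub>v (A *\<^sub>v v) + t \<cdot>\<^sub>v (A *\<^sub>v v)" unfolding w_def using A v
        by (simp add: mult_add_distrib_mat_vec[of _ n n] mult_mat_vec[of _ n n])
      also have "\<dots> = t \<cdot>\<^sub>v w" unfolding AAv w_def using A v t2
        by (intro eq_vecI) (auto simp: algebra_simps power2_eq_square)
      finally show ?thesis .
    qed
    have "M *\<^sub>v w = (d + t) \<cdot>\<^sub>v w"
    proof (rule eq_vecI)
      fix i assume "i < dim_vec ((d + t) \<cdot>\<^sub>v w)"
      then have i: "i < n" using w by simp
      from arg_cong[OF Aw, of "\<lambda>x. x $ i"] arg_cong[OF Av[OF w], of "\<lambda>x. x $ i"] i M w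
      show "(M *\<^sub>v w) $ i = ((d + t) \<cdot>\<^sub>v w) $ i" by (simp add: algebra_simps)
    qed (insert M w, simp)
    then have "eigenvalue M (d + t)" unfolding eigenvalue_def eigenvector_def using M w False by auto
    then show ?thesis using nu2 t2 by (intro exI[of _ "d + t"]) simp
  qed
qed

definition fsq :: "real mat \<Rightarrow> real" where
  "fsq A = (\<Sum>i<dim_row A. \<Sum>j<dim_col A. (A $$ (i, j))\<^sup>2)"

lemma frob_fsq: "frob_norm A = sqrt (fsq A)" unfolding frob_norm_def fsq_def ..

lemma fsq_ge0: "fsq A \<ge> 0" unfolding fsq_def by (intro sum_nonneg) auto

lemma cross_zero:
  fixes A Q :: "real mat"
  assumes A: "A \<in> carrier_mat n m" and Q: "Q \<in> carrier_mat n m"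
    and z: "transpose_mat A * Q = 0\<^sub>m m m"
  shows "(\<Sum>i<n. \<Sum>j<m. A $$ (i,j) * Q $$ (i,j)) = 0"
proof -
  have "(\<Sum>i<n. \<Sum>j<m. A $$ (i,j) * Q $$ (i,j)) = (\<Sum>j<m. \<Sum>i<n. A $$ (i,j) * Q $$ (i,j))"
    by (rule sum.swap)
  also have "\<dots> = (\<Sum>j<m. (transpose_mat A * Q) $$ (j,j))"
    using A Q by (intro sum.cong) (auto simp: scalar_prod_def lessThan_atLeast0)
  also have "\<dots> = 0" using z by simp
  finally show ?thesis .
qed

lemma fsq_pyth:
  fixes A Q :: "real mat"
  assumes A: "A \<in> carrier_mat n m" and Q: "Q \<in> carrier_mat n m"
    and z: "transpose_mat A * Q = 0\<^sub>m m m"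
  shows "fsq (A - c \<cdot>\<^sub>m Q) = fsq A + c^2 * fsq Q"
proof -
  have "fsq (A - c \<cdot>\<^sub>m Q) = (\<Sum>i<n. \<Sum>j<m. (A $$ (i,j))^2 + c^2 * (Q $$ (i,j))^2 - 2 * c * (A $$ (i,j) * Q $$ (i,j)))"
    unfolding fsq_def using A Q by (intro sum.cong) (auto simp: power2_eq_square algebra_simps)
  also have "\<dots> = fsq A + c^2 * fsq Q - 2 * c * (\<Sum>i<n. \<Sum>j<m. A $$ (i,j) * Q $$ (i,j))"
    unfolding fsq_def using A Q by (simp add: sum.distrib sum_subtractf sum_distrib_left)
  also have "\<dots> = fsq A + c^2 * fsq Q" using cross_zero[OF A Q z] by simp
  finally show ?thesis .
qed

lemma fsq_trace:
  fixes A :: "real mat"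
  assumes A: "A \<in> carrier_mat n m"
  shows "fsq A = (\<Sum>j<m. (transpose_mat A * A) $$ (j,j))"
proof -
  have "fsq A = (\<Sum>j<m. \<Sum>i<n. (A $$ (i,j))^2)" unfolding fsq_def using A by (simp add: sum.swap[of _ "{..<n}"])
  also have "\<dots> = (\<Sum>j<m. (transpose_mat A * A) $$ (j,j))"
    using A by (intro sum.cong) (auto simp: scalar_prod_def lessThan_atLeast0 power2_eq_square)
  finally show ?thesis .
qed

lemma fsq_iso:
  fixes X E :: "real mat"
  assumes X: "X \<in> carrier_mat N r" and E: "E \<in> carrier_mat r m" and XX: "transpose_mat X * X = 1\<^sub>m r"
  shows "fsq (X * E) = fsq E"
proof -
  have XE: "X * E \<in> carrier_mat N m" using X E by simp
  have "transpose_mat (X * E) * (X * E) = (transpose_mat E * transpose_mat X) * (X * E)"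
    using X E by (simp add: transpose_mult)
  also have "\<dots> = transpose_mat E * (transpose_mat X * (X * E))"
    by (rule assoc_mult_mat[of _ m r _ N], insert X E, auto)
  also have "transpose_mat X * (X * E) = (transpose_mat X * X) * E"
    by (rule assoc_mult_mat[symmetric, of _ r N _ r], insert X E, auto)
  also have "(transpose_mat X * X) * E = E" using XX E by simp
  finally show ?thesis using fsq_trace[OF XE] fsq_trace[OF E] by simp
qed

lemma fsq_mono:
  fixes A B :: "real mat"
  assumes A: "A \<in> carrier_mat n m" and B: "B \<in> carrier_mat n m"
    and le: "\<And>i j. i < n \<Longrightarrow> j < m \<Longrightarrow> \<bar>A $$ (i,j)\<bar> \<le> \<bar>B $$ (i,j)\<bar>"
  shows "fsq A \<le> fsq B"
  unfolding fsq_def using A B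
  by (auto intro!: sum_mono) (metis le abs_le_square_iff)

lemma mult_diag_right:
  fixes A :: "real mat"
  assumes A: "A \<in> carrier_mat n m" and i: "i < n" and j: "j < m"
  shows "(A * mat m m (\<lambda>(k,l). if k = l then g k l else 0)) $$ (i,j) = A $$ (i,j) * g j j"
proof -
  have "(A * mat m m (\<lambda>(k,l). if k = l then g k l else 0)) $$ (i,j)
      = (\<Sum>k\<in>{0..<m}. A $$ (i,k) * (if k = j then g k j else 0))"
    using A i j by (simp add: scalar_prod_def)
  also have "\<dots> = (\<Sum>k\<in>{0..<m}. if k = j then A $$ (i,j) * g j j else 0)"
    by (intro sum.cong) auto
  also have "\<dots> = A $$ (i,j) * g j j" using j by simp
  finally show ?thesis .
qed

lemma mult_diag_left:
  fixes A :: "real mat"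
  assumes A: "A \<in> carrier_mat m n" and i: "i < m" and j: "j < n"
  shows "(mat m m (\<lambda>(k,l). if k = l then g k l else 0) * A) $$ (i,j) = g i i * A $$ (i,j)"
proof -
  have "(mat m m (\<lambda>(k,l). if k = l then g k l else 0) * A) $$ (i,j)
      = (\<Sum>k\<in>{0..<m}. (if i = k then g i k else 0) * A $$ (k,j))"
    using A i j by (simp add: scalar_prod_def)
  also have "\<dots> = (\<Sum>k\<in>{0..<m}. if k = i then g i i * A $$ (i,j) else 0)"
    by (intro sum.cong) auto
  also have "\<dots> = g i i * A $$ (i,j)" using i by simp
  finally show ?thesis .
qed

lemma col_dot_bound:
  fixes A :: "real mat"
  assumes A: "A \<in> carrier_mat n m" and j: "j < m"
  shows "col A j \<bullet> col A j \<le> fsq A"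
proof -
  have "col A j \<bullet> col A j = (\<Sum>i<n. (A $$ (i,j))^2)"
    using A j by (simp add: scalar_prod_def lessThan_atLeast0 power2_eq_square)
  also have "\<dots> \<le> (\<Sum>i<n. \<Sum>l<m. (A $$ (i,l))^2)"
    by (intro sum_mono member_le_sum) (use j in auto)
  finally show ?thesis unfolding fsq_def using A by simp
qed

theorem mainTheorem7:
  fixes M X :: "real mat" and N r :: nat and \<epsilon> :: real
  assumes M_carrier: "M \<in> carrier_mat N N"
    and M_sym: "transpose_mat M = M"
    and eps_pos: "\<epsilon> > 0"
    and X_St: "X \<in> stiefel N r"
    and grad_small: "frob_norm (grad_g M X) \<le> \<epsilon>"
  shows "frob_norm (offdiag_part (transpose_mat X * M * X)) \<le> 2 * \<epsilon>
    \<and> frob_norm (X * transpose_mat X * M * X - M * X) \<le> \<epsilon>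
    \<and> frob_norm (X * diag_part (transpose_mat X * M * X) - M * X) \<le> 3 * \<epsilon>
    \<and> (\<forall>j<r. \<exists>lam. eigenvalue M lam \<and>
           \<bar>col X j \<bullet> (M *\<^sub>v col X j) - lam\<bar> \<le> 3 * \<epsilon>)"
proof -
  have X: "X \<in> carrier_mat N r" and XX: "transpose_mat X * X = 1\<^sub>m r"
    using X_St unfolding stiefel_def by auto
  have M: "M \<in> carrier_mat N N" by (rule M_carrier)
  have Xt: "transpose_mat X \<in> carrier_mat r N" using X by simp
  define S where "S = transpose_mat X * M * X"
  have S: "S \<in> carrier_mat r r" unfolding S_def using X M by simp
  define K where "K = Nmat r"
  have K: "K \<in> carrier_mat r r" unfolding K_def Nmat_def by simp
  define P where "P = X * transpose_mat X * M * X - M * X"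
  have P: "P \<in> carrier_mat N r" unfolding P_def using X M
    by (intro minus_carrier_mat mult_carrier_mat) (auto simp del: assoc_mult_mat)
  define C where "C = commutator S K"
  have C: "C \<in> carrier_mat r r" unfolding C_def commutator_def using S K
    by (intro minus_carrier_mat mult_carrier_mat) auto
  have XS: "X * transpose_mat X * M * X = X * S"
  proof -
    have "X * transpose_mat X * M = X * (transpose_mat X * M)"
      by (rule assoc_mult_mat[of _ N r _ N], insert X M, auto)
    then have "X * transpose_mat X * M * X = (X * (transpose_mat X * M)) * X" by simp
    also have "\<dots> = X * (transpose_mat X * M * X)"
      by (rule assoc_mult_mat[of _ N r _ N], insert X M, auto)
    finally show ?thesis unfolding S_def .
  qed
  have S2: "S = transpose_mat X * (M * X)" unfolding S_def
    by (rule assoc_mult_mat[of _ r N _ N], insert X M, auto)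
  have XtP: "transpose_mat X * P = 0\<^sub>m r r"
  proof -
    have "transpose_mat X * P = transpose_mat X * (X * S) - transpose_mat X * (M * X)"
      unfolding P_def XS by (rule mult_minus_distrib_mat[of _ r N], insert X M S, auto)
    also have "transpose_mat X * (X * S) = (transpose_mat X * X) * S"
      by (rule assoc_mult_mat[symmetric, of _ r N _ r], insert X S, auto)
    also have "\<dots> = S" using XX S by simp
    finally show ?thesis using S2[symmetric] S by (intro eq_matI) auto
  qed
  have PtX: "transpose_mat P * X = 0\<^sub>m r r"
  proof -
    have "transpose_mat (transpose_mat X * P) = transpose_mat P * X"
      using transpose_mult[OF Xt P] by simp
    moreover have "transpose_mat (0\<^sub>m r r :: real mat) = 0\<^sub>m r r" by (intro eq_matI) auto
    ultimately show ?thesis using XtP by simp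
  qed
  have G: "grad_g M X = P * K - (1/2) \<cdot>\<^sub>m (X * C)"
  proof -
    have dims: "dim_row X = N" "dim_col X = r" using X by auto
    have "(X * transpose_mat X - 1\<^sub>m N) * M = X * transpose_mat X * M - 1\<^sub>m N * M"
      by (rule minus_mult_distrib_mat[of _ N N], insert X M, auto)
    then have "(X * transpose_mat X - 1\<^sub>m N) * M = X * transpose_mat X * M - M" using M by simp
    then have "(X * transpose_mat X - 1\<^sub>m N) * M * X = (X * transpose_mat X * M - M) * X" by simp
    also have "\<dots> = P" unfolding P_def
      by (rule minus_mult_distrib_mat[of _ N N], insert X M, auto)
    finally show ?thesis unfolding grad_g_def dims C_def S_def K_def by simp
  qed
  have PK: "P * K \<in> carrier_mat N r" using P K by simp
  have XC: "X * C \<in> carrier_mat N r" using X C by simp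
  have orth1: "transpose_mat (P * K) * (X * C) = 0\<^sub>m r r"
  proof -
    have "transpose_mat (P * K) * (X * C) = (transpose_mat K * transpose_mat P) * (X * C)"
      using transpose_mult[OF P K] by simp
    also have "\<dots> = transpose_mat K * (transpose_mat P * (X * C))"
      by (rule assoc_mult_mat[of _ r r _ N], insert P K X C, auto)
    also have "transpose_mat P * (X * C) = (transpose_mat P * X) * C"
      by (rule assoc_mult_mat[symmetric, of _ r N _ r], insert P X C, auto)
    also have "\<dots> = 0\<^sub>m r r" using PtX C by simp
    finally show ?thesis using K by simp
  qed
  have fG: "fsq (grad_g M X) = fsq (P * K) + (1/4) * fsq C"
    unfolding G fsq_pyth[OF PK XC orth1] fsq_iso[OF X C XX] by (simp add: power2_eq_square)
  have fGe: "fsq (grad_g M X) \<le> \<epsilon>^2"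
    using grad_small unfolding frob_fsq by (rule sqrt_le_D)
  have PKe: "\<bar>P $$ (i,j)\<bar> \<le> \<bar>(P * K) $$ (i,j)\<bar>" if "i < N" "j < r" for i j
  proof -
    have "(P * K) $$ (i,j) = P $$ (i,j) * real (r - j)"
      unfolding K_def Nmat_def using mult_diag_right[OF P that, of "\<lambda>k l. real (r - k)"] by simp
    moreover have "\<bar>P $$ (i,j)\<bar> * 1 \<le> \<bar>P $$ (i,j)\<bar> * real (r - j)"
      by (rule mult_left_mono) (use that in auto)
    ultimately show ?thesis by (simp add: abs_mult)
  qed
  have fP: "fsq P \<le> fsq (P * K)" by (rule fsq_mono[OF P PK PKe])
  define D where "D = diag_part S"
  define E where "E = offdiag_part S"
  have D: "D \<in> carrier_mat r r" unfolding D_def diag_part_def using S by simp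
  have E: "E \<in> carrier_mat r r" unfolding E_def offdiag_part_def using D by (intro minus_carrier_mat) (simp add: D_def)
  have Dij: "D $$ (i,j) = (if i = j then S $$ (i,j) else 0)" if "i < r" "j < r" for i j
    unfolding D_def diag_part_def using S that by simp
  have Ce: "\<bar>E $$ (i,j)\<bar> \<le> \<bar>C $$ (i,j)\<bar>" if ij: "i < r" "j < r" for i j
  proof -
    have "(S * K) $$ (i,j) = S $$ (i,j) * real (r - j)"
      unfolding K_def Nmat_def using mult_diag_right[OF S ij, of "\<lambda>k l. real (r - k)"] by simp
    moreover have "(K * S) $$ (i,j) = real (r - i) * S $$ (i,j)"
      unfolding K_def Nmat_def using mult_diag_left[OF S ij, of "\<lambda>k l. real (r - k)"] by simp
    ultimately have c: "C $$ (i,j) = S $$ (i,j) * (real (r - j) - real (r - i))"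
      unfolding C_def commutator_def using S K ij by (simp add: algebra_simps)
    have e: "E $$ (i,j) = (if i = j then 0 else S $$ (i,j))"
      unfolding E_def offdiag_part_def D_def[symmetric] using S D ij Dij[OF ij] by simp
    show ?thesis
    proof (cases "i = j")
      case True then show ?thesis using e by simp
    next
      case False
      have "\<bar>real (r - j) - real (r - i)\<bar> \<ge> 1" using False ij by (simp add: of_nat_diff)
      then have "\<bar>S $$ (i,j)\<bar> * 1 \<le> \<bar>S $$ (i,j)\<bar> * \<bar>real (r - j) - real (r - i)\<bar>"
        by (rule mult_left_mono[OF _ abs_ge_zero])
      then show ?thesis unfolding c e using False by (simp add: abs_mult)
    qed
  qed
  have fE: "fsq E \<le> fsq C" by (rule fsq_mono[OF E C Ce])
  have fsqP: "fsq P \<le> \<epsilon>^2" using fG fGe fP fsq_ge0[of C] by linarith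
  have fsqE: "fsq E \<le> 4 * \<epsilon>^2" using fG fGe fE fsq_ge0[of "P * K"] by linarith
  define Y where "Y = X * D - M * X"
  have Y: "Y \<in> carrier_mat N r" unfolding Y_def using X D M by (intro minus_carrier_mat mult_carrier_mat) auto
  have XE: "X * E \<in> carrier_mat N r" using X E by simp
  have XEeq: "X * E = X * S - X * D" unfolding E_def offdiag_part_def D_def[symmetric]
    by (rule mult_minus_distrib_mat[of _ N r], insert X S D, auto)
  have Yeq: "Y = P - 1 \<cdot>\<^sub>m (X * E)" unfolding Y_def XEeq P_def XS
    using X S D M by (intro eq_matI) auto
  have orth2: "transpose_mat P * (X * E) = 0\<^sub>m r r"
  proof -
    have "transpose_mat P * (X * E) = (transpose_mat P * X) * E"
      by (rule assoc_mult_mat[symmetric, of _ r N _ r], insert P X E, auto)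
    also have "\<dots> = 0\<^sub>m r r" using PtX E by simp
    finally show ?thesis .
  qed
  have fY: "fsq Y = fsq P + fsq E" unfolding Yeq fsq_pyth[OF P XE orth2] fsq_iso[OF X E XX] by simp
  have fYe: "fsq Y \<le> (3 * \<epsilon>)^2" proof -
    have "0 \<le> \<epsilon> * \<epsilon>" by simp
    then show ?thesis using fY fsqP fsqE unfolding power2_eq_square by linarith
  qed
  have e0: "\<epsilon> \<ge> 0" using eps_pos by simp
  have c1: "frob_norm E \<le> 2 * \<epsilon>" unfolding frob_fsq
    using fsqE e0 by (simp add: real_sqrt_le_iff power_mult_distrib real_le_lsqrt)
  have c2: "frob_norm P \<le> \<epsilon>" unfolding frob_fsq using fsqP e0 by (simp add: real_le_lsqrt)
  have c3: "frob_norm Y \<le> 3 * \<epsilon>" unfolding frob_fsq using fYe e0 by (simp add: real_le_lsqrt)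
  have c4: "\<exists>lam. eigenvalue M lam \<and> \<bar>col X j \<bullet> (M *\<^sub>v col X j) - lam\<bar> \<le> 3 * \<epsilon>" if j: "j < r" for j
  proof -
    define x where "x = col X j"
    have x: "x \<in> carrier_vec N" unfolding x_def using X j by simp
    have x1: "x \<bullet> x = 1"
    proof -
      have "(transpose_mat X * X) $$ (j,j) = x \<bullet> x" unfolding x_def using X j by simp
      then show ?thesis using XX j by simp
    qed
    define d where "d = S $$ (j,j)"
    have d: "d = x \<bullet> (M *\<^sub>v x)" unfolding d_def S2 x_def using X M j by (simp add: mult_mat_vec_def)
    have "(M *\<^sub>v x - d \<cdot>\<^sub>v x) \<bullet> (M *\<^sub>v x - d \<cdot>\<^sub>v x) = col Y j \<bullet> col Y j"
    proof -
      have "(M *\<^sub>v x - d \<cdot>\<^sub>v x) $ i = - (col Y j $ i)" if i: "i < N" for i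
      proof -
        have "(X * D) $$ (i,j) = X $$ (i,j) * d"
          unfolding D_def diag_part_def d_def using mult_diag_right[OF X i j, of "\<lambda>k l. S $$ (k,l)"] S by simp
        then show ?thesis unfolding Y_def x_def using X M D i j by simp
      qed
      then show ?thesis using x Y M j unfolding scalar_prod_def
        by (intro sum.cong) auto
    qed
    also have "\<dots> \<le> fsq Y" by (rule col_dot_bound[OF Y j])
    finally have le9: "(M *\<^sub>v x - d \<cdot>\<^sub>v x) \<bullet> (M *\<^sub>v x - d \<cdot>\<^sub>v x) \<le> (3 * \<epsilon>)^2" using fYe by simp
    obtain lam where lam: "eigenvalue M lam" and ll: "(d - lam)^2 \<le> (M *\<^sub>v x - d \<cdot>\<^sub>v x) \<bullet> (M *\<^sub>v x - d \<cdot>\<^sub>v x)"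
      using sym_eig_near[OF M M_sym x x1] by blast
    have "(d - lam)^2 \<le> (3 * \<epsilon>)^2" using ll le9 by simp
    then have "\<bar>d - lam\<bar>^2 \<le> (3 * \<epsilon>)^2" by simp
    then have "\<bar>d - lam\<bar> \<le> 3 * \<epsilon>" by (rule power2_le_imp_le) (use e0 in simp)
    then show ?thesis using lam d unfolding x_def by auto
  qed
  show ?thesis using c1 c2 c3 c4 unfolding E_def Y_def D_def S_def P_def by blast
qed

end
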